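(* Let $\Lambda=(I,\varphi_i,\gamma_{ij})$ be a direct system of formulas in a functional language $\mathcal{L}$, $\mathcal{B}$ an $\mathcal{L}$-algebra, and suppose every $\varphi_i$ is realizable in $\mathcal{B}$, so that $\mathcal{B}_\Lambda=L(\Lambda)$ is a limit algebra over $\mathcal{B}$. Then there exists an ultrafilter $D$ over $I$ such that $\mathcal{B}_\Lambda$ embeds into the ultrapower $\mathcal{B}^I/D$.
   Context: Functional language: operation symbols $F$ (arity $n_F$) and constants only. A diagram-formula in a finite reduct $\mathcal{L}'$ of $\mathcal{L}$ in a finite variable set $X$ is a conjunction of atomic formulas and negated atomic formulas of $\mathcal{L}'$ such that: $\neg(x=y)$ is a conjunct for all distinct $x,y\in X$; for each operation $F\in\mathcal{L}'$ and $(x_0,\dots,x_{n_F})\in X^{n_F+1}$ exactly one of $F(x_1,\dots,x_{n_F})=x_0$ and its negation is a conjunct; for each constant $c\in\mathcal{L}'$ and $x\in X$ exactly one of $x=c$, $\neg(x=c)$ is a conjunct. A direct system of formulas $\Lambda=(I,\varphi_i,\gamma_{ij})$: $(I,\le)$ directed; each $\varphi_i$ a consistent diagram-formula in a finite reduct $\mathcal{L}_i$ and finite variables $X_i$; maps $\gamma_{ij}:X_i\to X_j$ ($i\le j$) with $\gamma_{ii}=\mathrm{id}$, $\gamma_{jk}\gamma_{ij}=\gamma_{ik}$, every conjunct of $\varphi_i(\gamma_{ij}(X_i))$ a conjunct of $\varphi_j$; every constant $c$ appears in a conjunct $x=c$ of some $\varphi_i$; for every $F$, $i$, $(x_1,\dots,x_{n_F})\in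 X_i^{n_F}$ some $j\ge i$ has a conjunct $F(\gamma_{ij}(x_1),\dots,\gamma_{ij}(x_{n_F}))=x_j$, $x_j\in X_j$. The limit algebra $L(\Lambda)$: universe $\{(x,i):x\in X_i\}/\!\equiv$ with $(x,i)\equiv(y,j)$ iff $\gamma_{ik}(x)=\gamma_{jk}(y)$ for some $k\ge i,j$; constants and operations are read off from conjuncts $x=c$ and $F(\gamma_{i_1j}(x_1),\dots)=x_j$ of the $\varphi_j$ (well defined). $\varphi_i$ is realizable in $\mathcal{B}$ if it is true under some assignment $X_i\to B$. *)

theory Defs
  imports Main "HOL-Library.FuncSet"
begin

text \<open>Operation symbols have type 'f with arity function ar; constants have type 'c;
  variables have type 'v.  The language L consists of all symbols of these types.\<close>

datatype ('f, 'c, 'v) trm = Var 'v | Cst 'c | App 'f "('f, 'c, 'v) trm list"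

datatype ('f, 'c, 'v) lit = Pos "('f, 'c, 'v) trm" "('f, 'c, 'v) trm"
                          | Neg "('f, 'c, 'v) trm" "('f, 'c, 'v) trm"

fun wf_trm :: "('f \<Rightarrow> nat) \<Rightarrow> ('f, 'c, 'v) trm \<Rightarrow> bool" where
  "wf_trm ar (Var x) = True"
| "wf_trm ar (Cst c) = True"
| "wf_trm ar (App F ts) = (length ts = ar F \<and> (\<forall>t\<in>set ts. wf_trm ar t))"

fun ops_trm :: "('f, 'c, 'v) trm \<Rightarrow> 'f set" where
  "ops_trm (Var x) = {}"
| "ops_trm (Cst c) = {}"
| "ops_trm (App F ts) = insert F (\<Union>t\<in>set ts. ops_trm t)"

fun csts_trm :: "('f, 'c, 'v) trm \<Rightarrow> 'c set" where
  "csts_trm (Var x) = {}"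
| "csts_trm (Cst c) = {c}"
| "csts_trm (App F ts) = (\<Union>t\<in>set ts. csts_trm t)"

fun vars_trm :: "('f, 'c, 'v) trm \<Rightarrow> 'v set" where
  "vars_trm (Var x) = {x}"
| "vars_trm (Cst c) = {}"
| "vars_trm (App F ts) = (\<Union>t\<in>set ts. vars_trm t)"

fun subst_trm :: "('v \<Rightarrow> 'w) \<Rightarrow> ('f, 'c, 'v) trm \<Rightarrow> ('f, 'c, 'w) trm" where
  "subst_trm g (Var x) = Var (g x)"
| "subst_trm g (Cst c) = Cst c"
| "subst_trm g (App F ts) = App F (map (subst_trm g) ts)"

fun lit_trms :: "('f, 'c, 'v) lit \<Rightarrow> ('f, 'c, 'v) trm set" where
  "lit_trms (Pos t s) = {t, s}"
| "lit_trms (Neg t s) = {t, s}"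

fun subst_lit :: "('v \<Rightarrow> 'w) \<Rightarrow> ('f, 'c, 'v) lit \<Rightarrow> ('f, 'c, 'w) lit" where
  "subst_lit g (Pos t s) = Pos (subst_trm g t) (subst_trm g s)"
| "subst_lit g (Neg t s) = Neg (subst_trm g t) (subst_trm g s)"

record ('a, 'f, 'c) alg =
  carrier :: "'a set"
  opr :: "'f \<Rightarrow> 'a list \<Rightarrow> 'a"
  cst :: "'c \<Rightarrow> 'a"

definition is_alg :: "('f \<Rightarrow> nat) \<Rightarrow> ('a, 'f, 'c, 'z) alg_scheme \<Rightarrow> bool" where
  "is_alg ar A \<longleftrightarrow>
     (\<forall>F as. length as = ar F \<and> set as \<subseteq> carrier A \<longrightarrow> opr A F as \<in> carrier A) \<and>
     (\<forall>c. cst A c \<in> carrier A)"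

fun eval :: "('a, 'f, 'c, 'z) alg_scheme \<Rightarrow> ('v \<Rightarrow> 'a) \<Rightarrow> ('f, 'c, 'v) trm \<Rightarrow> 'a" where
  "eval A \<sigma> (Var x) = \<sigma> x"
| "eval A \<sigma> (Cst c) = cst A c"
| "eval A \<sigma> (App F ts) = opr A F (map (eval A \<sigma>) ts)"

fun sat_lit :: "('a, 'f, 'c, 'z) alg_scheme \<Rightarrow> ('v \<Rightarrow> 'a) \<Rightarrow> ('f, 'c, 'v) lit \<Rightarrow> bool" where
  "sat_lit A \<sigma> (Pos t s) = (eval A \<sigma> t = eval A \<sigma> s)"
| "sat_lit A \<sigma> (Neg t s) = (eval A \<sigma> t \<noteq> eval A \<sigma> s)"

definition realizable :: "('a, 'f, 'c, 'z) alg_scheme \<Rightarrow> 'v set \<Rightarrow> ('f, 'c, 'v) lit set \<Rightarrow> bool" where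
  "realizable A X \<phi> \<longleftrightarrow> (\<exists>\<sigma>. \<sigma> ` X \<subseteq> carrier A \<and> (\<forall>l\<in>\<phi>. sat_lit A \<sigma> l))"

text \<open>Since a satisfiable set of
  quantifier-free formulas in variables X is satisfiable in the substructure generated by the
  image of X (a quotient of the term algebra), it suffices to quantify over algebras whose
  universe lies in the (infinite) type of terms; this gives a type-independent definition.\<close>
definition consistent :: "('f \<Rightarrow> nat) \<Rightarrow> 'v set \<Rightarrow> ('f, 'c, 'v) lit set \<Rightarrow> bool" where
  "consistent ar X \<phi> \<longleftrightarrow>
     (\<exists>A :: (('f, 'c, 'v) trm, 'f, 'c) alg. is_alg ar A \<and> realizable A X \<phi>)"

definition diagram_formula ::
  "('f \<Rightarrow> nat) \<Rightarrow> 'f set \<Rightarrow> 'c set \<Rightarrow> 'v set \<Rightarrow> ('f, 'c, 'v) lit set \<Rightarrow> bool" where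
  "diagram_formula ar Fs Cs X \<phi> \<longleftrightarrow>
     finite \<phi> \<and>
     (\<forall>l\<in>\<phi>. \<forall>t\<in>lit_trms l. wf_trm ar t \<and> ops_trm t \<subseteq> Fs \<and> csts_trm t \<subseteq> Cs
                              \<and> vars_trm t \<subseteq> X) \<and>
     (\<forall>x\<in>X. \<forall>y\<in>X. x \<noteq> y \<longrightarrow> Neg (Var x) (Var y) \<in> \<phi>) \<and>
     (\<forall>F\<in>Fs. \<forall>x0\<in>X. \<forall>xs. length xs = ar F \<and> set xs \<subseteq> X \<longrightarrow>
        (Pos (App F (map Var xs)) (Var x0) \<in> \<phi> \<longleftrightarrow> Neg (App F (map Var xs)) (Var x0) \<notin> \<phi>)) \<and>
     (\<forall>c\<in>Cs. \<forall>x\<in>X. Pos (Var x) (Cst c) \<in> \<phi> \<longleftrightarrow> Neg (Var x) (Cst c) \<notin> \<phi>)"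

definition directed :: "'i set \<Rightarrow> ('i \<Rightarrow> 'i \<Rightarrow> bool) \<Rightarrow> bool" where
  "directed I le \<longleftrightarrow> I \<noteq> {} \<and>
     (\<forall>i\<in>I. le i i) \<and>
     (\<forall>i\<in>I. \<forall>j\<in>I. \<forall>k\<in>I. le i j \<and> le j k \<longrightarrow> le i k) \<and>
     (\<forall>i\<in>I. \<forall>j\<in>I. le i j \<and> le j i \<longrightarrow> i = j) \<and>
     (\<forall>i\<in>I. \<forall>j\<in>I. \<exists>k\<in>I. le i k \<and> le j k)"

definition direct_system ::
  "('f \<Rightarrow> nat) \<Rightarrow> 'i set \<Rightarrow> ('i \<Rightarrow> 'i \<Rightarrow> bool) \<Rightarrow> ('i \<Rightarrow> 'f set) \<Rightarrow> ('i \<Rightarrow> 'c set)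
    \<Rightarrow> ('i \<Rightarrow> 'v set) \<Rightarrow> ('i \<Rightarrow> ('f, 'c, 'v) lit set) \<Rightarrow> ('i \<Rightarrow> 'i \<Rightarrow> 'v \<Rightarrow> 'v) \<Rightarrow> bool" where
  "direct_system ar I le Fs Cs X \<phi> \<gamma> \<longleftrightarrow>
     directed I le \<and>
     (\<forall>i\<in>I. finite (Fs i) \<and> finite (Cs i) \<and> finite (X i) \<and>
             diagram_formula ar (Fs i) (Cs i) (X i) (\<phi> i) \<and> consistent ar (X i) (\<phi> i)) \<and>
     (\<forall>i\<in>I. \<forall>j\<in>I. le i j \<longrightarrow> \<gamma> i j ` X i \<subseteq> X j) \<and>
     (\<forall>i\<in>I. \<forall>x\<in>X i. \<gamma> i i x = x) \<and>
     (\<forall>i\<in>I. \<forall>j\<in>I. \<forall>k\<in>I. le i j \<and> le j k \<longrightarrow> (\<forall>x\<in>X i. \<gamma> j k (\<gamma> i j x) = \<gamma> i k x)) \<and>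
     (\<forall>i\<in>I. \<forall>j\<in>I. le i j \<longrightarrow> (\<forall>l\<in>\<phi> i. subst_lit (\<gamma> i j) l \<in> \<phi> j)) \<and>
     (\<forall>c. \<exists>i\<in>I. \<exists>x\<in>X i. Pos (Var x) (Cst c) \<in> \<phi> i) \<and>
     (\<forall>F. \<forall>i\<in>I. \<forall>xs. length xs = ar F \<and> set xs \<subseteq> X i \<longrightarrow>
        (\<exists>j\<in>I. le i j \<and> (\<exists>x\<in>X j. Pos (App F (map (\<lambda>x. Var (\<gamma> i j x)) xs)) (Var x) \<in> \<phi> j)))"

definition lim_rel :: "'i set \<Rightarrow> ('i \<Rightarrow> 'i \<Rightarrow> bool) \<Rightarrow> ('i \<Rightarrow> 'v set) \<Rightarrow> ('i \<Rightarrow> 'i \<Rightarrow> 'v \<Rightarrow> 'v)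
    \<Rightarrow> (('v \<times> 'i) \<times> ('v \<times> 'i)) set" where
  "lim_rel I le X \<gamma> = {((x, i), (y, j)). i \<in> I \<and> j \<in> I \<and> x \<in> X i \<and> y \<in> X j \<and>
       (\<exists>k\<in>I. le i k \<and> le j k \<and> \<gamma> i k x = \<gamma> j k y)}"

definition lim_alg ::
  "'i set \<Rightarrow> ('i \<Rightarrow> 'i \<Rightarrow> bool) \<Rightarrow> ('i \<Rightarrow> 'v set) \<Rightarrow> ('i \<Rightarrow> ('f, 'c, 'v) lit set)
    \<Rightarrow> ('i \<Rightarrow> 'i \<Rightarrow> 'v \<Rightarrow> 'v) \<Rightarrow> (('v \<times> 'i) set, 'f, 'c) alg" where
  "lim_alg I le X \<phi> \<gamma> =
    (let R = lim_rel I le X \<gamma> in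
     \<lparr> carrier = {(x, i). i \<in> I \<and> x \<in> X i} // R,
       opr = (\<lambda>F as. let ps = map (\<lambda>a. SOME p. p \<in> a) as in
                 R `` {SOME (x, j). j \<in> I \<and> x \<in> X j \<and> (\<forall>p\<in>set ps. le (snd p) j) \<and>
                        Pos (App F (map (\<lambda>p. Var (\<gamma> (snd p) j (fst p))) ps)) (Var x) \<in> \<phi> j}),
       cst = (\<lambda>c. R `` {SOME (x, i). i \<in> I \<and> x \<in> X i \<and> Pos (Var x) (Cst c) \<in> \<phi> i}) \<rparr>)"

definition ultrafilter_on :: "'i set \<Rightarrow> 'i set set \<Rightarrow> bool" where
  "ultrafilter_on I D \<longleftrightarrow>
     D \<subseteq> Pow I \<and> I \<in> D \<and> {} \<notin> D \<and>
     (\<forall>A\<in>D. \<forall>B\<in>D. A \<inter> B \<in> D) \<and>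
     (\<forall>A\<in>D. \<forall>B. A \<subseteq> B \<and> B \<subseteq> I \<longrightarrow> B \<in> D) \<and>
     (\<forall>A. A \<subseteq> I \<longrightarrow> A \<in> D \<or> I - A \<in> D)"

definition up_rel :: "'i set \<Rightarrow> 'i set set \<Rightarrow> 'b set \<Rightarrow> (('i \<Rightarrow> 'b) \<times> ('i \<Rightarrow> 'b)) set" where
  "up_rel I D B = {(f, g). f \<in> I \<rightarrow>\<^sub>E B \<and> g \<in> I \<rightarrow>\<^sub>E B \<and> {i \<in> I. f i = g i} \<in> D}"

definition ultrapower ::
  "('b, 'f, 'c, 'z) alg_scheme \<Rightarrow> 'i set \<Rightarrow> 'i set set \<Rightarrow> (('i \<Rightarrow> 'b) set, 'f, 'c) alg" where
  "ultrapower B I D =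
    (let R = up_rel I D (carrier B) in
     \<lparr> carrier = (I \<rightarrow>\<^sub>E carrier B) // R,
       opr = (\<lambda>F as. let fs = map (\<lambda>a. SOME f. f \<in> a) as in
                 R `` {\<lambda>i\<in>I. opr B F (map (\<lambda>f. f i) fs)}),
       cst = (\<lambda>c. R `` {\<lambda>i\<in>I. cst B c}) \<rparr>)"

definition embedding :: "('f \<Rightarrow> nat) \<Rightarrow> ('a \<Rightarrow> 'b) \<Rightarrow> ('a, 'f, 'c, 'z) alg_scheme
    \<Rightarrow> ('b, 'f, 'c, 'y) alg_scheme \<Rightarrow> bool" where
  "embedding ar h A B \<longleftrightarrow>
     h ` carrier A \<subseteq> carrier B \<and> inj_on h (carrier A) \<and>
     (\<forall>F as. length as = ar F \<and> set as \<subseteq> carrier A \<longrightarrow>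
        h (opr A F as) = opr B F (map h as)) \<and>
     (\<forall>c. h (cst A c) = cst B c)"

end

theory Submission
  imports Defs
begin

lemma my_max_filter_ultra:
  assumes "(F::'a filter) \<noteq> bot"
  assumes max: "\<And>G. G \<noteq> bot \<Longrightarrow> G \<le> F \<Longrightarrow> F = G"
  shows "eventually P F \<or> eventually (\<lambda>x. \<not> P x) F"
proof (rule disjCI)
  assume "\<not> (\<forall>\<^sub>Fx in F. \<not> P x)"
  then have "inf F (principal {x. P x}) \<noteq> bot"
    by (simp add: trivial_limit_def eventually_inf_principal not_eventually)
  then have F: "F = inf F (principal {x. P x})"
    by (rule max) simp
  show "eventually P F"
    by (subst F) (simp add: eventually_inf_principal)
qed

lemma my_ex_ultrafilter:
  fixes F :: "'a filter"
  assumes F: "F \<noteq> bot"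
  shows "\<exists>U\<le>F. U \<noteq> bot \<and> (\<forall>P. eventually P U \<or> eventually (\<lambda>x. \<not> P x) U)"
proof -
  let ?X = "{G. G \<noteq> bot \<and> G \<le> F}"
  let ?R = "{(b, a). a \<noteq> bot \<and> a \<le> b \<and> b \<le> F}"
  have bot_notin_R: "c \<in> Chains ?R \<Longrightarrow> bot \<notin> c" for c
    by (auto simp: Chains_def)
  have [simp]: "Field ?R = ?X"
    by (auto simp: Field_def bot_unique)
  have "\<exists>m\<in>Field ?R. \<forall>a\<in>Field ?R. (m, a) \<in> ?R \<longrightarrow> a = m" (is "\<exists>m\<in>?A. ?B m")
  proof (rule Zorns_po_lemma)
    show "Partial_order ?R"
      by (auto simp: partial_order_on_def preorder_on_def
          antisym_def refl_on_def trans_def Field_def bot_unique)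
    show "\<exists>u\<in>Field ?R. \<forall>a\<in>C. (a, u) \<in> ?R" if C: "C \<in> Chains ?R" for C
    proof (simp, intro exI conjI ballI)
      have Inf_C: "Inf C \<noteq> bot" "Inf C \<le> F" if "C \<noteq> {}"
      proof -
        from C that have "Inf C = bot \<longleftrightarrow> (\<exists>x\<in>C. x = bot)"
          unfolding trivial_limit_def by (intro eventually_Inf_base) (auto simp: Chains_def)
        with C show "Inf C \<noteq> bot"
          by (simp add: bot_notin_R)
        from that obtain x where "x \<in> C" by auto
        with C show "Inf C \<le> F"
          by (auto intro!: Inf_lower2[of x] simp: Chains_def)
      qed
      then have [simp]: "inf F (Inf C) = (if C = {} then F else Inf C)"
        using C by (auto simp add: inf_absorb2)
      from C show "inf F (Inf C) \<noteq> bot"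
        by (simp add: F Inf_C)
      from C show "inf F (Inf C) \<le> F"
        by (simp add: Chains_def Inf_C F)
      with C show "inf F (Inf C) \<le> x" "x \<le> F" if "x \<in> C" for x
        using that  by (auto intro: Inf_lower simp: Chains_def)
    qed
  qed
  then obtain U where U: "U \<in> ?A" "?B U" ..
  then have "U \<le> F" "U \<noteq> bot" by auto
  moreover have "\<forall>P. eventually P U \<or> eventually (\<lambda>x. \<not> P x) U"
    using U by (intro allI my_max_filter_ultra) auto
  ultimately show ?thesis by blast
qed

lemma ex_ultrafilter_on:
  assumes "directed I le"
  shows "\<exists>D. ultrafilter_on I D \<and> (\<forall>i\<in>I. {j\<in>I. le i j} \<in> D)"
proof -
  let ?F = "INF i\<in>I. principal {j\<in>I. le i j}"
  have ne: "I \<noteq> {}" and refl: "\<forall>i\<in>I. le i i" and dir: "\<forall>i\<in>I. \<forall>j\<in>I. \<exists>k\<in>I. le i k \<and> le j k"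
   and tr: "\<forall>i\<in>I. \<forall>j\<in>I. \<forall>k\<in>I. le i j \<and> le j k \<longrightarrow> le i k"
    using assms unfolding directed_def by blast+
  have ev: "eventually P ?F \<longleftrightarrow> (\<exists>i\<in>I. eventually P (principal {j\<in>I. le i j}))" for P
  proof (rule eventually_INF_base)
    show "I \<noteq> {}" by fact
    fix a b assume "a \<in> I" "b \<in> I"
    then obtain k where k: "k \<in> I" "le a k" "le b k" using dir by blast
    show "\<exists>x\<in>I. principal {j \<in> I. le x j} \<le> inf (principal {j \<in> I. le a j}) (principal {j \<in> I. le b j})"
    proof (intro bexI[of _ k])
      have "{j \<in> I. le k j} \<subseteq> {j \<in> I. le a j} \<inter> {j \<in> I. le b j}"
        using k tr \<open>a \<in> I\<close> \<open>b \<in> I\<close> by blast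
      then show "principal {j \<in> I. le k j} \<le> inf (principal {j \<in> I. le a j}) (principal {j \<in> I. le b j})"
        by (simp add: inf_principal)
    qed (fact k)
  qed
  have "?F \<noteq> bot"
    unfolding trivial_limit_def ev using refl by (auto simp: eventually_principal)
  then have "\<exists>U\<le>?F. U \<noteq> bot \<and> (\<forall>P. eventually P U \<or> eventually (\<lambda>x. \<not> P x) U)"
    by (rule my_ex_ultrafilter)
  then obtain U where U: "U \<le> ?F" "U \<noteq> bot" "\<forall>P. eventually P U \<or> eventually (\<lambda>x. \<not> P x) U"
    by (elim exE conjE)
  have cone: "eventually (\<lambda>x. x \<in> {j\<in>I. le i j}) U" if "i \<in> I" for i
  proof -
    have "eventually (\<lambda>x. x \<in> {j\<in>I. le i j}) ?F"
      unfolding ev using that by (auto simp: eventually_principal)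
    then show ?thesis using U(1) by (simp add: le_filter_def)
  qed
  have inI: "eventually (\<lambda>x. x \<in> I) U"
  proof -
    obtain i where "i \<in> I" using ne by blast
    from cone[OF this] show ?thesis by (rule eventually_mono) simp
  qed
  define D where "D = {A. A \<subseteq> I \<and> eventually (\<lambda>x. x \<in> A) U}"
  have "ultrafilter_on I D"
    unfolding ultrafilter_on_def D_def
  proof (intro conjI ballI allI impI)
    show "{A. A \<subseteq> I \<and> (\<forall>\<^sub>F x in U. x \<in> A)} \<subseteq> Pow I" by auto
    show "I \<in> {A. A \<subseteq> I \<and> (\<forall>\<^sub>F x in U. x \<in> A)}" using inI by auto
    show "{} \<notin> {A. A \<subseteq> I \<and> (\<forall>\<^sub>F x in U. x \<in> A)}" using U(2) by (auto simp: trivial_limit_def)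
    fix A B assume "A \<in> {A. A \<subseteq> I \<and> (\<forall>\<^sub>F x in U. x \<in> A)}" "B \<in> {A. A \<subseteq> I \<and> (\<forall>\<^sub>F x in U. x \<in> A)}"
    then show "A \<inter> B \<in> {A. A \<subseteq> I \<and> (\<forall>\<^sub>F x in U. x \<in> A)}"
      by (auto intro: eventually_conj[THEN eventually_mono])
  next
    fix A B assume "A \<in> {A. A \<subseteq> I \<and> (\<forall>\<^sub>F x in U. x \<in> A)}" "A \<subseteq> B \<and> B \<subseteq> I"
    then show "B \<in> {A. A \<subseteq> I \<and> (\<forall>\<^sub>F x in U. x \<in> A)}"
      by (auto elim: eventually_mono)
  next
    fix A assume "A \<subseteq> I"
    from U(3)[rule_format, of "\<lambda>x. x \<in> A"]
    show "A \<in> {A. A \<subseteq> I \<and> (\<forall>\<^sub>F x in U. x \<in> A)} \<or> I - A \<in> {A. A \<subseteq> I \<and> (\<forall>\<^sub>F x in U. x \<in> A)}"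
      using inI \<open>A \<subseteq> I\<close> by (auto intro: eventually_conj[THEN eventually_mono])
  qed
  moreover have "\<forall>i\<in>I. {j\<in>I. le i j} \<in> D" using cone unfolding D_def by auto
  ultimately show ?thesis by blast
qed

lemma uf_all:
  fixes m :: nat
  assumes "ultrafilter_on I D" and "\<forall>n<m. {j\<in>I. Q n j} \<in> D"
  shows "{j\<in>I. \<forall>n<m. Q n j} \<in> D"
  using assms(2)
proof (induction m)
  case 0
  then show ?case using assms(1) unfolding ultrafilter_on_def by simp
next
  case (Suc m)
  have "{j\<in>I. \<forall>n<Suc m. Q n j} = {j\<in>I. \<forall>n<m. Q n j} \<inter> {j\<in>I. Q m j}"
    by (auto simp add: less_Suc_eq)
  moreover have "{j\<in>I. \<forall>n<m. Q n j} \<in> D" using Suc by simp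
  moreover have "{j\<in>I. Q m j} \<in> D" using Suc.prems by simp
  ultimately show ?case using assms(1) unfolding ultrafilter_on_def by simp
qed

theorem mainTheorem11:
  fixes ar :: "'f \<Rightarrow> nat"
    and I :: "'i set" and le :: "'i \<Rightarrow> 'i \<Rightarrow> bool"
    and Fs :: "'i \<Rightarrow> 'f set" and Cs :: "'i \<Rightarrow> 'c set"
    and X :: "'i \<Rightarrow> 'v set" and \<phi> :: "'i \<Rightarrow> ('f, 'c, 'v) lit set"
    and \<gamma> :: "'i \<Rightarrow> 'i \<Rightarrow> 'v \<Rightarrow> 'v"
    and B :: "('b, 'f, 'c) alg"
  assumes "direct_system ar I le Fs Cs X \<phi> \<gamma>"
    and "is_alg ar B"
    and "\<forall>i\<in>I. realizable B (X i) (\<phi> i)"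
  shows "\<exists>D. ultrafilter_on I D \<and>
           (\<exists>h. embedding ar h (lim_alg I le X \<phi> \<gamma>) (ultrapower B I D))"
proof -
  note ds = assms(1)[unfolded direct_system_def]
  have dir: "directed I le" using ds by (rule conjunct1)
  note c2 = ds[THEN conjunct2, THEN conjunct1]
  note c3 = ds[THEN conjunct2, THEN conjunct2, THEN conjunct1]
  note c5 = ds[THEN conjunct2, THEN conjunct2, THEN conjunct2, THEN conjunct2, THEN conjunct1]
  note c6 = ds[THEN conjunct2, THEN conjunct2, THEN conjunct2, THEN conjunct2, THEN conjunct2, THEN conjunct1]
  note c7 = ds[THEN conjunct2, THEN conjunct2, THEN conjunct2, THEN conjunct2, THEN conjunct2, THEN conjunct2, THEN conjunct1]
  note c8 = ds[THEN conjunct2, THEN conjunct2, THEN conjunct2, THEN conjunct2, THEN conjunct2, THEN conjunct2, THEN conjunct2]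
  have ne: "I \<noteq> {}" and refl: "\<And>i. i\<in>I \<Longrightarrow> le i i"
    and tr: "\<And>i j k. i\<in>I \<Longrightarrow> j\<in>I \<Longrightarrow> k\<in>I \<Longrightarrow> le i j \<Longrightarrow> le j k \<Longrightarrow> le i k"
    and ub: "\<And>i j. i\<in>I \<Longrightarrow> j\<in>I \<Longrightarrow> \<exists>k\<in>I. le i k \<and> le j k"
    using dir unfolding directed_def by blast+
  have gX: "\<And>i j x. i\<in>I \<Longrightarrow> j\<in>I \<Longrightarrow> le i j \<Longrightarrow> x\<in>X i \<Longrightarrow> \<gamma> i j x \<in> X j"
    using c3 by blast
  have gcomp: "\<And>i j k x. i\<in>I \<Longrightarrow> j\<in>I \<Longrightarrow> k\<in>I \<Longrightarrow> le i j \<Longrightarrow> le j k \<Longrightarrow> x\<in>X i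
      \<Longrightarrow> \<gamma> j k (\<gamma> i j x) = \<gamma> i k x"
    using c5 by blast
  have gsub: "\<And>i j l. i\<in>I \<Longrightarrow> j\<in>I \<Longrightarrow> le i j \<Longrightarrow> l\<in>\<phi> i \<Longrightarrow> subst_lit (\<gamma> i j) l \<in> \<phi> j"
    using c6 by blast
  have csts: "\<And>c. \<exists>i\<in>I. \<exists>x\<in>X i. Pos (Var x) (Cst c) \<in> \<phi> i"
    using c7 by blast
  have ops: "\<And>F i xs. i\<in>I \<Longrightarrow> length xs = ar F \<Longrightarrow> set xs \<subseteq> X i \<Longrightarrow>
      \<exists>j\<in>I. le i j \<and> (\<exists>x\<in>X j. Pos (App F (map (\<lambda>x. Var (\<gamma> i j x)) xs)) (Var x) \<in> \<phi> j)"
    using c8 by blast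
  have negs: "\<And>i x y. i\<in>I \<Longrightarrow> x\<in>X i \<Longrightarrow> y\<in>X i \<Longrightarrow> x\<noteq>y \<Longrightarrow> Neg (Var x) (Var y) \<in> \<phi> i"
  proof -
    fix i x y assume a: "i\<in>I" "x\<in>X i" "y\<in>X i" "x\<noteq>y"
    from c2 a(1) have "diagram_formula ar (Fs i) (Cs i) (X i) (\<phi> i)" by simp
    then have "\<forall>x\<in>X i. \<forall>y\<in>X i. x \<noteq> y \<longrightarrow> Neg (Var x) (Var y) \<in> \<phi> i"
      unfolding diagram_formula_def by (elim conjE)
    then show "Neg (Var x) (Var y) \<in> \<phi> i" using a by simp
  qed
  have "\<exists>\<sigma>. \<forall>i\<in>I. \<sigma> i ` X i \<subseteq> carrier B \<and> (\<forall>l\<in>\<phi> i. sat_lit B (\<sigma> i) l)"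
    using assms(3) unfolding realizable_def by (rule bchoice)
  then obtain \<sigma> where \<sigma>X: "\<And>i x. i\<in>I \<Longrightarrow> x \<in> X i \<Longrightarrow> \<sigma> i x \<in> carrier B"
    and \<sigma>sat: "\<And>i l. i\<in>I \<Longrightarrow> l\<in>\<phi> i \<Longrightarrow> sat_lit B (\<sigma> i) l"
    by (auto simp: image_subset_iff)
  obtain D where D: "ultrafilter_on I D" and cone: "\<And>i. i\<in>I \<Longrightarrow> {j\<in>I. le i j} \<in> D"
    using ex_ultrafilter_on[OF dir] by blast
  have DI: "I \<in> D" and Dempty: "{} \<notin> D"
    and Dint: "\<And>A1 A2. A1\<in>D \<Longrightarrow> A2\<in>D \<Longrightarrow> A1 \<inter> A2 \<in> D"
    and Dsup: "\<And>A1 A2. A1\<in>D \<Longrightarrow> A1 \<subseteq> A2 \<Longrightarrow> A2 \<subseteq> I \<Longrightarrow> A2 \<in> D"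
    using D unfolding ultrafilter_on_def by blast+
  define b0 where "b0 = cst B undefined"
  have b0: "b0 \<in> carrier B" using assms(2) unfolding is_alg_def b0_def by blast
  have oprB: "\<And>F bs. length bs = ar F \<Longrightarrow> set bs \<subseteq> carrier B \<Longrightarrow> opr B F bs \<in> carrier B"
    using assms(2) unfolding is_alg_def by blast
  define S where "S = {(x,i). i\<in>I \<and> x\<in>X i}"
  define R where "R = lim_rel I le X \<gamma>"
  define g where "g = (\<lambda>(x,i). \<lambda>j\<in>I. if le i j then \<sigma> j (\<gamma> i j x) else b0)"
  define RU where "RU = up_rel I D (carrier B)"
  define h where "h = (\<lambda>a. RU `` {g (SOME p. p \<in> a)})"
  have Rdef: "((x,i),(y,j)) \<in> R \<longleftrightarrow> i \<in> I \<and> j \<in> I \<and> x \<in> X i \<and> y \<in> X j \<and>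
       (\<exists>k\<in>I. le i k \<and> le j k \<and> \<gamma> i k x = \<gamma> j k y)" for x i y j
    unfolding R_def lim_rel_def by simp
  have eqR: "equiv S R"
  proof (rule equivI)
    show "R \<subseteq> S \<times> S" unfolding R_def lim_rel_def S_def by auto
    show "refl_on S R"
    proof (rule refl_onI)
      fix p assume "p \<in> S"
      then obtain x i where p: "p = (x,i)" "i\<in>I" "x\<in>X i" unfolding S_def by blast
      then show "(p,p) \<in> R" using refl by (auto simp: Rdef)
    qed
    show "sym R"
    proof (rule symI)
      fix p q assume "(p,q) \<in> R"
      then show "(q,p) \<in> R" by (cases p; cases q) (auto simp: Rdef)
    qed
    show "trans R"
    proof (rule transI)
      fix p q r assume pq: "(p,q) \<in> R" and qr: "(q,r) \<in> R"
      obtain x i where [simp]: "p = (x,i)" by (cases p)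
      obtain y j where [simp]: "q = (y,j)" by (cases q)
      obtain z l where [simp]: "r = (z,l)" by (cases r)
      from pq obtain k1 where k1: "i\<in>I" "j\<in>I" "x\<in>X i" "y\<in>X j" "k1\<in>I" "le i k1" "le j k1" "\<gamma> i k1 x = \<gamma> j k1 y"
        by (auto simp: Rdef)
      from qr obtain k2 where k2: "l\<in>I" "z\<in>X l" "k2\<in>I" "le j k2" "le l k2" "\<gamma> j k2 y = \<gamma> l k2 z"
        by (auto simp: Rdef)
      obtain k3 where k3: "k3\<in>I" "le k1 k3" "le k2 k3" using ub[OF k1(5) k2(3)] by blast
      have "\<gamma> i k3 x = \<gamma> k1 k3 (\<gamma> i k1 x)" using gcomp k1 k3 by metis
      also have "\<dots> = \<gamma> k1 k3 (\<gamma> j k1 y)" using k1 by simp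
      also have "\<dots> = \<gamma> j k3 y" using gcomp k1 k3 by metis
      also have "\<dots> = \<gamma> k2 k3 (\<gamma> j k2 y)" using gcomp k1 k2 k3 by metis
      also have "\<dots> = \<gamma> k2 k3 (\<gamma> l k2 z)" using k2 by simp
      also have "\<dots> = \<gamma> l k3 z" using gcomp k2 k3 by metis
      finally have "\<gamma> i k3 x = \<gamma> l k3 z" .
      moreover have "le i k3" "le l k3" using tr k1 k2 k3 by blast+
      ultimately show "(p,r) \<in> R" using k1 k2 k3 by (auto simp: Rdef)
    qed
  qed
  have RUdef: "(f1,f2) \<in> RU \<longleftrightarrow> f1 \<in> I \<rightarrow>\<^sub>E carrier B \<and> f2 \<in> I \<rightarrow>\<^sub>E carrier B \<and> {i\<in>I. f1 i = f2 i} \<in> D"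
    for f1 f2 unfolding RU_def up_rel_def by simp
  have eqRU: "equiv (I \<rightarrow>\<^sub>E carrier B) RU"
  proof (rule equivI)
    show "RU \<subseteq> (I \<rightarrow>\<^sub>E carrier B) \<times> (I \<rightarrow>\<^sub>E carrier B)" unfolding RU_def up_rel_def by auto
    show "refl_on (I \<rightarrow>\<^sub>E carrier B) RU"
      by (rule refl_onI) (simp add: RUdef DI)
    show "sym RU"
    proof (rule symI)
      fix f1 f2 assume "(f1,f2) \<in> RU"
      moreover have "{i\<in>I. f1 i = f2 i} = {i\<in>I. f2 i = f1 i}" by auto
      ultimately show "(f2,f1) \<in> RU" unfolding RUdef by simp
    qed
    show "trans RU"
    proof (rule transI)
      fix f1 f2 f3 assume a: "(f1,f2) \<in> RU" "(f2,f3) \<in> RU"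
      have "{i\<in>I. f1 i = f2 i} \<inter> {i\<in>I. f2 i = f3 i} \<in> D" using a Dint unfolding RUdef by blast
      moreover have "{i\<in>I. f1 i = f2 i} \<inter> {i\<in>I. f2 i = f3 i} \<subseteq> {i\<in>I. f1 i = f3 i}" by auto
      ultimately have "{i\<in>I. f1 i = f3 i} \<in> D" using Dsup by blast
      then show "(f1,f3) \<in> RU" using a unfolding RUdef by blast
    qed
  qed
  have gval: "g (x,i) j = \<sigma> j (\<gamma> i j x)" if "j \<in> I" "le i j" for x i j
    using that unfolding g_def by simp
  have gS: "g p \<in> I \<rightarrow>\<^sub>E carrier B" if "p \<in> S" for p
  proof -
    obtain x i where p: "p = (x,i)" "i\<in>I" "x\<in>X i" using \<open>p\<in>S\<close> unfolding S_def by blast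
    show ?thesis unfolding p(1) g_def using p gX \<sigma>X b0 by auto
  qed
  have K1: "(g p, g q) \<in> RU" if "(p,q) \<in> R" for p q
  proof -
    obtain x i where [simp]: "p = (x,i)" by (cases p)
    obtain y i' where [simp]: "q = (y,i')" by (cases q)
    from that obtain k where k: "i\<in>I" "i'\<in>I" "x\<in>X i" "y\<in>X i'" "k\<in>I" "le i k" "le i' k" "\<gamma> i k x = \<gamma> i' k y"
      by (auto simp: Rdef)
    have "{j\<in>I. le k j} \<subseteq> {j\<in>I. g p j = g q j}"
    proof
      fix j assume j: "j \<in> {j\<in>I. le k j}"
      then have j': "j\<in>I" "le i j" "le i' j" using tr k by blast+
      have "\<gamma> i j x = \<gamma> k j (\<gamma> i k x)" using gcomp[of i k j x] k j' j by simp
      also have "\<dots> = \<gamma> k j (\<gamma> i' k y)" using k by simp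
      also have "\<dots> = \<gamma> i' j y" using gcomp[of i' k j y] k j' j by simp
      finally show "j \<in> {j\<in>I. g p j = g q j}" using gval j' by simp
    qed
    moreover have "{j\<in>I. le k j} \<in> D" using cone k(5) by simp
    ultimately have "{j\<in>I. g p j = g q j} \<in> D" using Dsup[of "{j\<in>I. le k j}" "{j\<in>I. g p j = g q j}"] by auto
    moreover have "p \<in> S" "q \<in> S" using k unfolding S_def by auto
    ultimately show ?thesis using gS[of p] gS[of q] by (simp only: RUdef)
  qed
  have K2: "(p, q) \<in> R" if "p \<in> S" "q \<in> S" "(g p, g q) \<in> RU" for p q
  proof -
    obtain x i where [simp]: "p = (x,i)" and xi: "i\<in>I" "x\<in>X i" using \<open>p\<in>S\<close> unfolding S_def by blast
    obtain y i' where [simp]: "q = (y,i')" and yi: "i'\<in>I" "y\<in>X i'" using \<open>q\<in>S\<close> unfolding S_def by blast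
    obtain k where k: "k\<in>I" "le i k" "le i' k" using ub xi yi by blast
    have "{j\<in>I. g p j = g q j} \<in> D" using that(3) by (simp only: RUdef)
    then have "{j\<in>I. g p j = g q j} \<inter> {j\<in>I. le k j} \<in> D" using Dint cone k(1) by simp
    then have "{j\<in>I. g p j = g q j} \<inter> {j\<in>I. le k j} \<noteq> {}" using Dempty by metis
    then obtain j where j: "j\<in>I" "le k j" "g p j = g q j" by auto
    have j': "le i j" "le i' j" using tr k j xi yi by blast+
    have eq: "\<sigma> j (\<gamma> i j x) = \<sigma> j (\<gamma> i' j y)" using j j' gval by simp
    have "\<gamma> i j x = \<gamma> i' j y"
    proof (rule ccontr)
      assume "\<gamma> i j x \<noteq> \<gamma> i' j y"
      then have "Neg (Var (\<gamma> i j x)) (Var (\<gamma> i' j y)) \<in> \<phi> j"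
        using negs gX j j' xi yi by blast
      then show False using \<sigma>sat[OF j(1)] eq by fastforce
    qed
    then show ?thesis using xi yi j j' by (auto simp: Rdef)
  qed
  have rep: "(SOME p. p \<in> a) \<in> S \<and> a = R `` {SOME p. p \<in> a}" if a: "a \<in> S // R" for a
  proof -
    obtain q where q: "a = R``{q}" "q \<in> S" by (rule quotientE[OF a]) blast
    have "q \<in> a" using q eqR equiv_class_self by metis
    then have "(SOME p. p \<in> a) \<in> a" by (rule someI)
    then have "(q, SOME p. p \<in> a) \<in> R" using q by simp
    moreover then have "(SOME p. p \<in> a) \<in> S" using eqR unfolding equiv_def refl_on_def by blast
    ultimately show ?thesis using q equiv_class_eq[OF eqR] by metis
  qed
  have hcls: "h (R``{p}) = RU``{g p}" if "p \<in> S" for p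
  proof -
    have "p \<in> R``{p}" using that eqR equiv_class_self by metis
    then have "(SOME q. q \<in> R``{p}) \<in> R``{p}" by (rule someI)
    then have "(p, SOME q. q \<in> R``{p}) \<in> R" by simp
    then have "(g p, g (SOME q. q \<in> R``{p})) \<in> RU" by (rule K1)
    then show ?thesis unfolding h_def using equiv_class_eq[OF eqRU] by metis
  qed
  have ub_list: "\<exists>i0\<in>I. \<forall>p\<in>set qs. le (snd p) i0" if "set qs \<subseteq> S" for qs
    using that
  proof (induction qs)
    case Nil
    then show ?case using ne by auto
  next
    case (Cons q qs)
    then obtain i0 where i0: "i0\<in>I" "\<forall>p\<in>set qs. le (snd p) i0" by auto
    have qS: "snd q \<in> I" using Cons.prems unfolding S_def by auto
    obtain k where k: "k\<in>I" "le i0 k" "le (snd q) k" using ub[OF i0(1) qS] by blast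
    have "\<forall>p\<in>set qs. le (snd p) k"
    proof
      fix p assume "p \<in> set qs"
      then have "snd p \<in> I" "le (snd p) i0" using Cons.prems i0 unfolding S_def by auto
      then show "le (snd p) k" using tr i0 k by blast
    qed
    then show ?case using k by auto
  qed
  have carrA: "carrier (lim_alg I le X \<phi> \<gamma>) = S // R"
    by (simp add: lim_alg_def Let_def S_def R_def)
  have carrU: "carrier (ultrapower B I D) = (I \<rightarrow>\<^sub>E carrier B) // RU"
    by (simp add: ultrapower_def Let_def RU_def)
  have "embedding ar h (lim_alg I le X \<phi> \<gamma>) (ultrapower B I D)"
    unfolding embedding_def
  proof (intro conjI allI impI)
    show "h ` carrier (lim_alg I le X \<phi> \<gamma>) \<subseteq> carrier (ultrapower B I D)"
    proof
      fix b assume "b \<in> h ` carrier (lim_alg I le X \<phi> \<gamma>)"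
      then obtain a where a: "a \<in> S // R" "b = h a" using carrA by auto
      obtain p where p: "a = R``{p}" "p \<in> S" using a(1) by (rule quotientE)
      show "b \<in> carrier (ultrapower B I D)" unfolding carrU a(2) p(1) hcls[OF p(2)]
        using gS[OF p(2)] by (rule quotientI)
    qed
    show "inj_on h (carrier (lim_alg I le X \<phi> \<gamma>))"
    proof (rule inj_onI)
      fix a b assume a: "a \<in> carrier (lim_alg I le X \<phi> \<gamma>)" and b: "b \<in> carrier (lim_alg I le X \<phi> \<gamma>)"
        and hab: "h a = h b"
      obtain p where p: "a = R``{p}" "p \<in> S" using a carrA by (auto elim: quotientE)
      obtain q where q: "b = R``{q}" "q \<in> S" using b carrA by (auto elim: quotientE)
      have "RU``{g p} = RU``{g q}" using hab hcls p q by simp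
      then have "(g p, g q) \<in> RU" using eq_equiv_class[OF _ eqRU] gS q by blast
      then have "(p,q) \<in> R" using K2 p q by blast
      then show "a = b" using p q equiv_class_eq[OF eqR] by simp
    qed
    show "h (opr (lim_alg I le X \<phi> \<gamma>) F as) = opr (ultrapower B I D) F (map h as)"
      if asm: "length as = ar F \<and> set as \<subseteq> carrier (lim_alg I le X \<phi> \<gamma>)" for F as
    proof -
      have lenF: "length as = ar F" and asS: "set as \<subseteq> S // R" using asm carrA by auto
      define ps where "ps = map (\<lambda>a. SOME p. p \<in> a) as"
      have lps: "length ps = length as" by (simp add: ps_def)
      have psS: "set ps \<subseteq> S" using asS rep unfolding ps_def by auto
      have psn: "as ! n = R``{ps!n}" if n: "n < length as" for n
      proof -
        have "as!n \<in> S//R" using asS nth_mem[OF n] by blast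
        then show ?thesis using rep n by (simp add: ps_def)
      qed
      obtain i0 where i0: "i0\<in>I" "\<forall>p\<in>set ps. le (snd p) i0" using ub_list[OF psS] by blast
      have pI: "snd p \<in> I \<and> fst p \<in> X (snd p)" if "p \<in> set ps" for p
        using psS that unfolding S_def by auto
      define xs where "xs = map (\<lambda>p. \<gamma> (snd p) i0 (fst p)) ps"
      have lxs: "length xs = ar F" using lenF lps xs_def by simp
      have sxs: "set xs \<subseteq> X i0" using pI i0 gX unfolding xs_def by auto
      obtain j0 where j0: "j0\<in>I" "le i0 j0" and
        "\<exists>x\<in>X j0. Pos (App F (map (\<lambda>x. Var (\<gamma> i0 j0 x)) xs)) (Var x) \<in> \<phi> j0"
        using ops[OF i0(1) lxs sxs] by blast
      then obtain x0 where x0: "x0 \<in> X j0" "Pos (App F (map (\<lambda>x. Var (\<gamma> i0 j0 x)) xs)) (Var x0) \<in> \<phi> j0"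
        by blast
      have me: "map (\<lambda>x. Var (\<gamma> i0 j0 x)) xs = map (\<lambda>p. Var (\<gamma> (snd p) j0 (fst p))) ps"
        unfolding xs_def map_map
      proof (rule map_cong[OF HOL.refl])
        fix p assume p: "p \<in> set ps"
        show "((\<lambda>x. Var (\<gamma> i0 j0 x)) \<circ> (\<lambda>p. \<gamma> (snd p) i0 (fst p))) p = Var (\<gamma> (snd p) j0 (fst p))"
          using gcomp[of "snd p" i0 j0 "fst p"] pI[OF p] i0 j0 p by simp
      qed
      have x0': "Pos (App F (map (\<lambda>p. Var (\<gamma> (snd p) j0 (fst p))) ps)) (Var x0) \<in> \<phi> j0"
        using x0(2) unfolding me .
      let ?Q = "\<lambda>(x, j). j \<in> I \<and> x \<in> X j \<and> (\<forall>p\<in>set ps. le (snd p) j) \<and>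
                   Pos (App F (map (\<lambda>p. Var (\<gamma> (snd p) j (fst p))) ps)) (Var x) \<in> \<phi> j"
      have oprA: "opr (lim_alg I le X \<phi> \<gamma>) F as = R `` {Eps ?Q}"
        by (simp add: lim_alg_def Let_def R_def ps_def)
      have "\<forall>p\<in>set ps. le (snd p) j0" using i0 j0 pI tr by blast
      then have "?Q (x0, j0)" using j0 x0 x0' by simp
      then have "?Q (Eps ?Q)" by (rule someI)
      moreover obtain x k where z: "Eps ?Q = (x,k)" by (cases "Eps ?Q")
      ultimately have xk: "k\<in>I" "x\<in>X k" "\<forall>p\<in>set ps. le (snd p) k"
        "Pos (App F (map (\<lambda>p. Var (\<gamma> (snd p) k (fst p))) ps)) (Var x) \<in> \<phi> k" by auto
      have kS: "(x,k) \<in> S" using xk unfolding S_def by simp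
      define fs where "fs = map (\<lambda>a. SOME f. f \<in> a) (map h as)"
      have lfs: "length fs = length as" by (simp add: fs_def)
      have oprU: "opr (ultrapower B I D) F (map h as) = RU `` {\<lambda>j\<in>I. opr B F (map (\<lambda>f. f j) fs)}"
        by (simp add: ultrapower_def Let_def RU_def fs_def o_def)
      have fsn: "(g (ps!n), fs!n) \<in> RU" if n: "n < length as" for n
      proof -
        have pn: "ps!n \<in> S" using psS nth_mem[of n ps] n lps by auto
        have hn: "h (as!n) = RU``{g (ps!n)}" using psn[OF n] hcls[OF pn] by simp
        have "g (ps!n) \<in> RU``{g (ps!n)}" using equiv_class_self[OF eqRU gS[OF pn]] .
        then have "(SOME f. f \<in> RU``{g (ps!n)}) \<in> RU``{g (ps!n)}" by (rule someI[where P="\<lambda>f. f \<in> RU``{g (ps!n)}"])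
        then show ?thesis using n hn by (simp add: fs_def)
      qed
      have fsE: "fs!n \<in> I \<rightarrow>\<^sub>E carrier B" if n: "n < length as" for n
        using fsn[OF n] by (simp add: RUdef)
      define G where "G = (\<lambda>j\<in>I. opr B F (map (\<lambda>f. f j) fs))"
      have GE: "G \<in> I \<rightarrow>\<^sub>E carrier B"
      proof -
        have "opr B F (map (\<lambda>f. f j) fs) \<in> carrier B" if j: "j \<in> I" for j
        proof (rule oprB)
          show "length (map (\<lambda>f. f j) fs) = ar F" using lfs lenF by simp
          show "set (map (\<lambda>f. f j) fs) \<subseteq> carrier B"
          proof
            fix b assume "b \<in> set (map (\<lambda>f. f j) fs)"
            then obtain n where n: "n < length fs" "b = (fs!n) j" by (auto simp: in_set_conv_nth)
            then show "b \<in> carrier B" using fsE[of n] lfs j by auto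
          qed
        qed
        then show ?thesis unfolding G_def by auto
      qed
      have T1: "{j\<in>I. \<forall>n<length as. g (ps!n) j = (fs!n) j} \<in> D"
      proof (rule uf_all[OF D])
        show "\<forall>n<length as. {j\<in>I. g (ps!n) j = (fs!n) j} \<in> D"
          using fsn by (simp add: RUdef)
      qed
      have T2: "{j\<in>I. le k j} \<in> D" using cone xk by simp
      have T: "{j\<in>I. \<forall>n<length as. g (ps!n) j = (fs!n) j} \<inter> {j\<in>I. le k j} \<subseteq> {j\<in>I. g (x,k) j = G j}"
      proof
        fix j assume j: "j \<in> {j\<in>I. \<forall>n<length as. g (ps!n) j = (fs!n) j} \<inter> {j\<in>I. le k j}"
        then have jI: "j\<in>I" and kj: "le k j" and eqs: "\<forall>n<length as. g (ps!n) j = (fs!n) j" by auto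
        have m1: "map (\<lambda>f. f j) fs = map (\<lambda>p. g p j) ps"
          by (rule nth_equalityI) (use lfs lps eqs in auto)
        have pj: "le (snd p) j" if "p \<in> set ps" for p
          using tr[of "snd p" k j] pI[OF that] xk that jI kj by blast
        have m2: "map (\<lambda>p. g p j) ps = map (\<lambda>p. \<sigma> j (\<gamma> k j (\<gamma> (snd p) k (fst p)))) ps"
        proof (rule map_cong[OF HOL.refl])
          fix p assume p: "p \<in> set ps"
          obtain a b where pab: "p = (a,b)" by (cases p)
          have "g p j = \<sigma> j (\<gamma> (snd p) j (fst p))" using gval[of j b a] jI pj[OF p] pab by simp
          also have "\<dots> = \<sigma> j (\<gamma> k j (\<gamma> (snd p) k (fst p)))"
            using gcomp[of "snd p" k j "fst p"] pI[OF p] xk jI kj p by simp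
          finally show "g p j = \<sigma> j (\<gamma> k j (\<gamma> (snd p) k (fst p)))" .
        qed
        have "subst_lit (\<gamma> k j) (Pos (App F (map (\<lambda>p. Var (\<gamma> (snd p) k (fst p))) ps)) (Var x)) \<in> \<phi> j"
          using gsub[OF xk(1) jI kj xk(4)] .
        then have "sat_lit B (\<sigma> j) (subst_lit (\<gamma> k j) (Pos (App F (map (\<lambda>p. Var (\<gamma> (snd p) k (fst p))) ps)) (Var x)))"
          using \<sigma>sat jI by blast
        then have "opr B F (map (\<lambda>p. \<sigma> j (\<gamma> k j (\<gamma> (snd p) k (fst p)))) ps) = \<sigma> j (\<gamma> k j x)"
          by (simp add: o_def)
        then have "G j = g (x,k) j" unfolding G_def using jI kj m1 m2 gval[of j k x] by simp
        then show "j \<in> {j\<in>I. g (x,k) j = G j}" using jI by simp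
      qed
      have "{j\<in>I. g (x,k) j = G j} \<in> D"
        using Dsup[OF Dint[OF T1 T2] T] by auto
      then have "(g (x,k), G) \<in> RU" using gS[OF kS] GE by (simp only: RUdef)
      then have "RU``{g (x,k)} = RU``{G}" by (rule equiv_class_eq[OF eqRU])
      then show ?thesis unfolding oprA z hcls[OF kS] oprU G_def .
    qed
    show "h (cst (lim_alg I le X \<phi> \<gamma>) c) = cst (ultrapower B I D) c" for c
    proof -
      let ?Q = "\<lambda>(x, i). i \<in> I \<and> x \<in> X i \<and> Pos (Var x) (Cst c) \<in> \<phi> i"
      have cstA: "cst (lim_alg I le X \<phi> \<gamma>) c = R `` {Eps ?Q}"
        by (simp add: lim_alg_def Let_def R_def)
      have cstU: "cst (ultrapower B I D) c = RU `` {\<lambda>j\<in>I. cst B c}"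
        by (simp add: ultrapower_def Let_def RU_def)
      obtain x0 i0 where w: "i0\<in>I" "x0 \<in> X i0" "Pos (Var x0) (Cst c) \<in> \<phi> i0" using csts by blast
      have "?Q (x0, i0)" using w by simp
      then have "?Q (Eps ?Q)" by (rule someI)
      moreover obtain x i where z: "Eps ?Q = (x,i)" by (cases "Eps ?Q")
      ultimately have xi: "i\<in>I" "x\<in>X i" "Pos (Var x) (Cst c) \<in> \<phi> i" by auto
      have pS: "(x,i) \<in> S" using xi unfolding S_def by simp
      have cB: "(\<lambda>j\<in>I. cst B c) \<in> I \<rightarrow>\<^sub>E carrier B" using assms(2) unfolding is_alg_def by auto
      have "{j\<in>I. le i j} \<subseteq> {j\<in>I. g (x,i) j = (\<lambda>j\<in>I. cst B c) j}"
      proof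
        fix j assume j: "j \<in> {j\<in>I. le i j}"
        then have "subst_lit (\<gamma> i j) (Pos (Var x) (Cst c)) \<in> \<phi> j" using gsub[of i j "Pos (Var x) (Cst c)"] xi by simp
        then have "sat_lit B (\<sigma> j) (Pos (Var (\<gamma> i j x)) (Cst c))" using \<sigma>sat[of j "Pos (Var (\<gamma> i j x)) (Cst c)"] j by simp
        then show "j \<in> {j\<in>I. g (x,i) j = (\<lambda>j\<in>I. cst B c) j}" using j gval by simp
      qed
      moreover have "{j\<in>I. le i j} \<in> D" using cone xi by simp
      ultimately have "{j\<in>I. g (x,i) j = (\<lambda>j\<in>I. cst B c) j} \<in> D"
        using Dsup[of "{j\<in>I. le i j}"] by auto
      then have "(g (x,i), \<lambda>j\<in>I. cst B c) \<in> RU" using gS[OF pS] cB by (simp only: RUdef)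
      then show ?thesis unfolding cstA cstU z hcls[OF pS] by (rule equiv_class_eq[OF eqRU])
    qed
  qed
  then show ?thesis using D by blast
qed
end
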